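(* Let $P$ be a finite $(3+1)$-free poset and let $a,b,c\in P$. Then: (i) if $a\approx b$ and $b\approx c$, then $a\approx c$; (ii) if $a\mathrel{\top} b$ and $b\approx c$, then $a\mathrel{\top} c$; (iii) if $a\mathrel{\bot} b$ and $b\approx c$, then $a\mathrel{\bot} c$; (iv) if $a\mathrel{\top} b$, then $U_a=U_b$; (v) if $a\mathrel{\bot} b$, then $D_a=D_b$; (vi) $v(a)$ and $v(b)$ are incomparable in the view order if and only if $a\mathrel{\top} b$ or $a\mathrel{\bot} b$; (vii) it is not the case that both $a\mathrel{\top} b$ and $b\mathrel{\bot} c$.
   Context: A poset $P$ is $(3+1)$-free if there are no $a,b,c,d\in P$ with $a<b<c$ and $d$ incomparable to each of $a,b,c$. For $a\in P$ let $D_a=\{x\in P: x<a\}$ and $U_a=\{x\in P: x>a\}$. Write $a\mathrel{\top} b$ if neither of the sets $D_a,D_b$ contains the other, and $a\mathrel{\bot} b$ if neither of the sets $U_a,U_b$ contains the other. Write $a\approx b$ (clones) if $D_a=D_b$ and $U_a=U_b$. The view of $a$ is $v(a)=(D_a,P\setminus U_a)$; views are ordered by $v(a)\le v(b)$ iff $D_a\subseteq D_b$ and $U_a\supseteq U_b$, and $v(a),v(b)$ are incomparable if neither $v(a)\le v(b)$ nor $v(b)\le v(a)$. *)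

theory Defs
  imports Main
begin

definition strict_poset :: "'a set \<Rightarrow> ('a \<Rightarrow> 'a \<Rightarrow> bool) \<Rightarrow> bool" where
  "strict_poset P lt \<longleftrightarrow>
     (\<forall>x\<in>P. \<not> lt x x) \<and>
     (\<forall>x\<in>P. \<forall>y\<in>P. \<forall>z\<in>P. lt x y \<and> lt y z \<longrightarrow> lt x z)"

definition incomp :: "('a \<Rightarrow> 'a \<Rightarrow> bool) \<Rightarrow> 'a \<Rightarrow> 'a \<Rightarrow> bool" where
  "incomp lt x y \<longleftrightarrow> x \<noteq> y \<and> \<not> lt x y \<and> \<not> lt y x"

definition free_3_1 :: "'a set \<Rightarrow> ('a \<Rightarrow> 'a \<Rightarrow> bool) \<Rightarrow> bool" where
  "free_3_1 P lt \<longleftrightarrow> \<not> (\<exists>a\<in>P. \<exists>b\<in>P. \<exists>c\<in>P. \<exists>d\<in>P.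
      lt a b \<and> lt b c \<and> incomp lt d a \<and> incomp lt d b \<and> incomp lt d c)"

definition down :: "'a set \<Rightarrow> ('a \<Rightarrow> 'a \<Rightarrow> bool) \<Rightarrow> 'a \<Rightarrow> 'a set" where
  "down P lt a = {x\<in>P. lt x a}"

definition up :: "'a set \<Rightarrow> ('a \<Rightarrow> 'a \<Rightarrow> bool) \<Rightarrow> 'a \<Rightarrow> 'a set" where
  "up P lt a = {x\<in>P. lt a x}"

definition top_rel :: "'a set \<Rightarrow> ('a \<Rightarrow> 'a \<Rightarrow> bool) \<Rightarrow> 'a \<Rightarrow> 'a \<Rightarrow> bool" where
  "top_rel P lt a b \<longleftrightarrow> \<not> down P lt a \<subseteq> down P lt b \<and> \<not> down P lt b \<subseteq> down P lt a"

definition bot_rel :: "'a set \<Rightarrow> ('a \<Rightarrow> 'a \<Rightarrow> bool) \<Rightarrow> 'a \<Rightarrow> 'a \<Rightarrow> bool" where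
  "bot_rel P lt a b \<longleftrightarrow> \<not> up P lt a \<subseteq> up P lt b \<and> \<not> up P lt b \<subseteq> up P lt a"

definition clone :: "'a set \<Rightarrow> ('a \<Rightarrow> 'a \<Rightarrow> bool) \<Rightarrow> 'a \<Rightarrow> 'a \<Rightarrow> bool" where
  "clone P lt a b \<longleftrightarrow> down P lt a = down P lt b \<and> up P lt a = up P lt b"

definition view :: "'a set \<Rightarrow> ('a \<Rightarrow> 'a \<Rightarrow> bool) \<Rightarrow> 'a \<Rightarrow> 'a set \<times> 'a set" where
  "view P lt a = (down P lt a, P - up P lt a)"

text \<open>v(a) \<le> v(b) iff D_a \<subseteq> D_b and U_a \<supseteq> U_b, i.e. componentwise inclusion of views.\<close>
definition view_le :: "'a set \<times> 'a set \<Rightarrow> 'a set \<times> 'a set \<Rightarrow> bool" where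
  "view_le v w \<longleftrightarrow> fst v \<subseteq> fst w \<and> snd v \<subseteq> snd w"

definition view_incomparable :: "'a set \<times> 'a set \<Rightarrow> 'a set \<times> 'a set \<Rightarrow> bool" where
  "view_incomparable v w \<longleftrightarrow> \<not> view_le v w \<and> \<not> view_le w v"

end

theory Submission
  imports Defs
begin

lemma no31:
  assumes "free_3_1 P lt" "x \<in> P" "y \<in> P" "z \<in> P" "d \<in> P" "lt x y" "lt y z"
    "d \<noteq> x" "\<not> lt d x" "\<not> lt x d" "d \<noteq> y" "\<not> lt d y" "\<not> lt y d"
    "d \<noteq> z" "\<not> lt d z" "\<not> lt z d"
  shows False
  using assms unfolding free_3_1_def incomp_def by blast

lemma part4:
  assumes sp: "strict_poset P lt" and f: "free_3_1 P lt" and aP: "a \<in> P" and bP: "b \<in> P"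
    and t: "top_rel P lt a b"
  shows "up P lt a \<subseteq> up P lt b"
proof
  fix z assume z: "z \<in> up P lt a"
  show "z \<in> up P lt b"
  proof (rule ccontr)
    assume nz: "z \<notin> up P lt b"
    from t obtain x where x: "x \<in> P" "lt x a" "\<not> lt x b" unfolding top_rel_def down_def by blast
    from t obtain y where y: "y \<in> P" "lt y b" "\<not> lt y a" unfolding top_rel_def down_def by blast
    from z have zP: "z \<in> P" "lt a z" unfolding up_def by auto
    from nz zP have nbz: "\<not> lt b z" unfolding up_def by auto
    have irr: "\<And>u. u \<in> P \<Longrightarrow> \<not> lt u u" and tr: "\<And>u v w. u\<in>P \<Longrightarrow> v\<in>P \<Longrightarrow> w\<in>P \<Longrightarrow> lt u v \<Longrightarrow> lt v w \<Longrightarrow> lt u w"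
      using sp unfolding strict_poset_def by blast+
    show False
      apply (rule no31[OF f x(1) aP zP(1) bP x(2) zP(2)])
      using tr[OF y(1) x(1) aP _ x(2)] y(2) y(3) apply blast
      using tr[OF y(1) bP x(1) y(2) _] tr[OF y(1) x(1) aP _ x(2)] y(3) apply blast
      using x(3) apply blast
      using x(2) x(3) apply blast
      using tr[OF y(1) bP aP y(2)] y(3) apply blast
      using tr[OF x(1) aP bP x(2)] x(3) apply blast
      using tr[OF x(1) aP bP x(2)] zP x(3) apply blast
      using nbz apply blast
      using tr[OF aP zP(1) bP zP(2)] tr[OF x(1) aP bP x(2)] x(3) by blast
  qed
qed

lemma part5:
  assumes sp: "strict_poset P lt" and f: "free_3_1 P lt" and aP: "a \<in> P" and bP: "b \<in> P"
    and t: "bot_rel P lt a b"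
  shows "down P lt a \<subseteq> down P lt b"
proof
  fix z assume z: "z \<in> down P lt a"
  show "z \<in> down P lt b"
  proof (rule ccontr)
    assume nz: "z \<notin> down P lt b"
    from t obtain x where x: "x \<in> P" "lt a x" "\<not> lt b x" unfolding bot_rel_def up_def by blast
    from t obtain y where y: "y \<in> P" "lt b y" "\<not> lt a y" unfolding bot_rel_def up_def by blast
    from z have zP: "z \<in> P" "lt z a" unfolding down_def by auto
    from nz zP have nbz: "\<not> lt z b" unfolding down_def by auto
    have irr: "\<And>u. u \<in> P \<Longrightarrow> \<not> lt u u" and tr: "\<And>u v w. u\<in>P \<Longrightarrow> v\<in>P \<Longrightarrow> w\<in>P \<Longrightarrow> lt u v \<Longrightarrow> lt v w \<Longrightarrow> lt u w"
      using sp unfolding strict_poset_def by blast+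
    show False
      apply (rule no31[OF f zP(1) aP x(1) bP zP(2) x(2)])
      using tr[OF zP(1) aP x(1) zP(2) x(2)] x(3) apply blast
      using tr[OF bP zP(1) aP _ zP(2)] tr[OF bP aP x(1) _ x(2)] x(3) apply blast
      using nbz apply blast
      using x(2) x(3) apply blast
      using tr[OF bP aP x(1) _ x(2)] x(3) apply blast
      using tr[OF aP bP y(1) _ y(2)] y(3) apply blast
      using tr[OF aP bP y(1) _ y(2)] y(3) x(2) apply blast
      using x(3) apply blast
      using tr[OF aP x(1) bP x(2)] tr[OF aP bP y(1) _ y(2)] y(3) by blast
  qed
qed

lemma top_sym: "top_rel P lt a b \<Longrightarrow> top_rel P lt b a" unfolding top_rel_def by blast
lemma bot_sym: "bot_rel P lt a b \<Longrightarrow> bot_rel P lt b a" unfolding bot_rel_def by blast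

lemma part6:
  assumes sp: "strict_poset P lt" and f: "free_3_1 P lt" and aP: "a \<in> P" and bP: "b \<in> P"
    and nt: "\<not> top_rel P lt a b" and nb: "\<not> bot_rel P lt a b"
    and Dab: "down P lt a \<subseteq> down P lt b"
  shows "view_le (view P lt a) (view P lt b) \<or> view_le (view P lt b) (view P lt a)"
proof (cases "up P lt b \<subseteq> up P lt a")
  case True
  have "P - up P lt a \<subseteq> P - up P lt b" using True by blast
  then show ?thesis using Dab unfolding view_le_def view_def by simp
next
  case False
  hence Uab: "up P lt a \<subseteq> up P lt b" using nb unfolding bot_rel_def by blast
  have Dba: "down P lt b \<subseteq> down P lt a"
  proof
    fix x assume xb: "x \<in> down P lt b"
    show "x \<in> down P lt a"
    proof (rule ccontr)
      assume nx: "x \<notin> down P lt a"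
      from False obtain z where z: "z \<in> P" "lt b z" "\<not> lt a z" unfolding up_def by blast
      from xb have x: "x \<in> P" "lt x b" unfolding down_def by auto
      with nx have nxa: "\<not> lt x a" unfolding down_def by auto
      have irr: "\<And>u. u \<in> P \<Longrightarrow> \<not> lt u u" and tr: "\<And>u v w. u\<in>P \<Longrightarrow> v\<in>P \<Longrightarrow> w\<in>P \<Longrightarrow> lt u v \<Longrightarrow> lt v w \<Longrightarrow> lt u w"
        using sp unfolding strict_poset_def by blast+
      show False
        apply (rule no31[OF f x(1) bP z(1) aP x(2) z(2)])
        using tr[OF x(1) bP z(1) x(2) z(2)] z(3) apply blast
        using tr[OF x(1) bP z(1) x(2) z(2)] tr[OF aP x(1) z(1)] z(3) apply blast
        using nxa apply blast
        using z(2) z(3) apply blast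
        using tr[OF aP bP z(1) _ z(2)] z(3) apply blast
        using tr[OF x(1) bP aP x(2)] nxa apply blast
        using tr[OF x(1) bP z(1) x(2) z(2)] nxa apply blast
        using z(3) apply blast
        using tr[OF x(1) bP z(1) x(2) z(2)] tr[OF x(1) z(1) aP] nxa by blast
    qed
  qed
  have "P - up P lt b \<subseteq> P - up P lt a" using Uab by blast
  then show ?thesis using Dba unfolding view_le_def view_def by simp
qed

lemma diff_sub: "A \<subseteq> P \<Longrightarrow> B \<subseteq> P \<Longrightarrow> (P - A \<subseteq> P - B) = (B \<subseteq> A)" by blast

theorem lemma2p6:
  fixes P :: "'a set" and lt :: "'a \<Rightarrow> 'a \<Rightarrow> bool" and a b c :: 'a
  assumes "finite P" and "strict_poset P lt" and "free_3_1 P lt"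
    and "a \<in> P" and "b \<in> P" and "c \<in> P"
  shows "(clone P lt a b \<and> clone P lt b c \<longrightarrow> clone P lt a c)
    \<and> (top_rel P lt a b \<and> clone P lt b c \<longrightarrow> top_rel P lt a c)
    \<and> (bot_rel P lt a b \<and> clone P lt b c \<longrightarrow> bot_rel P lt a c)
    \<and> (top_rel P lt a b \<longrightarrow> up P lt a = up P lt b)
    \<and> (bot_rel P lt a b \<longrightarrow> down P lt a = down P lt b)
    \<and> (view_incomparable (view P lt a) (view P lt b) \<longleftrightarrow> top_rel P lt a b \<or> bot_rel P lt a b)
    \<and> \<not> (top_rel P lt a b \<and> bot_rel P lt b c)"
proof -
  note sp = assms(2) and f = assms(3) and aP = assms(4) and bP = assms(5) and cP = assms(6)
  have p4: "top_rel P lt a b \<longrightarrow> up P lt a = up P lt b"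
  proof
    assume t: "top_rel P lt a b"
    show "up P lt a = up P lt b"
      using part4[OF sp f aP bP t] part4[OF sp f bP aP top_sym[OF t]] by (rule equalityI)
  qed
  have p5: "\<And>a b. a \<in> P \<Longrightarrow> b \<in> P \<Longrightarrow> bot_rel P lt a b \<longrightarrow> down P lt a = down P lt b"
  proof
    fix a b assume aP: "a \<in> P" and bP: "b \<in> P" and t: "bot_rel P lt a b"
    show "down P lt a = down P lt b"
      using part5[OF sp f aP bP t] part5[OF sp f bP aP bot_sym[OF t]] by (rule equalityI)
  qed
  have upsub: "\<And>x. up P lt x \<subseteq> P" unfolding up_def by auto
  have key: "\<And>x y. view_le (view P lt x) (view P lt y) \<longleftrightarrow> down P lt x \<subseteq> down P lt y \<and> up P lt y \<subseteq> up P lt x"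
  proof -
    fix x y
    show "view_le (view P lt x) (view P lt y) \<longleftrightarrow> down P lt x \<subseteq> down P lt y \<and> up P lt y \<subseteq> up P lt x"
      unfolding view_le_def view_def fst_conv snd_conv using diff_sub[OF upsub[of x] upsub[of y]] by simp
  qed
  have p6: "view_incomparable (view P lt a) (view P lt b) \<longleftrightarrow> top_rel P lt a b \<or> bot_rel P lt a b"
  proof
    assume vi: "view_incomparable (view P lt a) (view P lt b)"
    show "top_rel P lt a b \<or> bot_rel P lt a b"
    proof (rule ccontr)
      assume "\<not> (top_rel P lt a b \<or> bot_rel P lt a b)"
      hence nt: "\<not> top_rel P lt a b" "\<not> bot_rel P lt a b" by auto
      show False
      proof (cases "down P lt a \<subseteq> down P lt b")
        case True
        from part6[OF sp f aP bP nt True] vi show False unfolding view_incomparable_def by blast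
      next
        case False
        hence D: "down P lt b \<subseteq> down P lt a" using nt(1) unfolding top_rel_def by blast
        have nt1: "\<not> top_rel P lt b a" using top_sym[of P lt b a] nt(1) by blast
        have nt2: "\<not> bot_rel P lt b a" using bot_sym[of P lt b a] nt(2) by blast
        note nt' = nt1 nt2
        from part6[OF sp f bP aP nt' D] vi show False unfolding view_incomparable_def by blast
      qed
    qed
  next
    assume "top_rel P lt a b \<or> bot_rel P lt a b"
    thus "view_incomparable (view P lt a) (view P lt b)"
      unfolding view_incomparable_def key top_rel_def bot_rel_def by blast
  qed
  have p7: "\<not> (top_rel P lt a b \<and> bot_rel P lt b c)"
  proof
    assume h: "top_rel P lt a b \<and> bot_rel P lt b c"
    have U: "up P lt a = up P lt b" using p4 h by blast
    have D: "down P lt b = down P lt c" using p5[OF bP cP] h by blast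
    from h obtain x where x: "x \<in> P" "lt x a" "\<not> lt x b" unfolding top_rel_def down_def by blast
    from h obtain z where z: "z \<in> P" "lt b z" "\<not> lt c z" unfolding bot_rel_def up_def by blast
    have za: "lt a z" using U z unfolding up_def by blast
    have nxc: "\<not> lt x c" using D x unfolding down_def by blast
    have Uf: "\<And>w. w \<in> P \<Longrightarrow> lt a w \<longleftrightarrow> lt b w" using U unfolding up_def by blast
    have Df: "\<And>w. w \<in> P \<Longrightarrow> lt w b \<longleftrightarrow> lt w c" using D unfolding down_def by blast
    have irr: "\<And>u. u \<in> P \<Longrightarrow> \<not> lt u u" and tr: "\<And>u v w. u\<in>P \<Longrightarrow> v\<in>P \<Longrightarrow> w\<in>P \<Longrightarrow> lt u v \<Longrightarrow> lt v w \<Longrightarrow> lt u w"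
      using sp unfolding strict_poset_def by blast+
    have nab: "\<not> lt a b" using Uf[OF bP] irr[OF bP] by blast
    show False
      apply (rule no31[OF f x(1) aP z(1) cP x(2) za])
      using tr[OF x(1) aP z(1) x(2) za] z(3) apply blast
      using tr[OF x(1) aP z(1) x(2) za] tr[OF cP x(1) z(1)] z(3) apply blast
      using nxc apply blast
      using za z(3) apply blast
      using tr[OF cP aP z(1) _ za] z(3) apply blast
      using Df[OF aP] nab apply blast
      using Df[OF bP] irr[OF bP] z(2) apply blast
      using z(3) apply blast
      using Df[OF z(1)] tr[OF bP z(1) bP z(2)] irr[OF bP] by blast
  qed
  have p1: "clone P lt a b \<and> clone P lt b c \<longrightarrow> clone P lt a c" unfolding clone_def by simp
  have p2: "top_rel P lt a b \<and> clone P lt b c \<longrightarrow> top_rel P lt a c" unfolding clone_def top_rel_def by auto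
  have p3: "bot_rel P lt a b \<and> clone P lt b c \<longrightarrow> bot_rel P lt a c" unfolding clone_def bot_rel_def by auto
  show ?thesis using p1 p2 p3 p4 p5[OF aP bP] p6 p7 by (intro conjI)
qed

end
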